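(* Let $\eta_1,\dots,\eta_n$ be admissible measures on $\mathbb R$; for each $i$ let $X_i$ have law $\cosh(x)\,\eta_i(dx)$ (a probability measure), and $U_i:=\tanh(X_i)$. Define $m_i:=\eta_i(\mathbb R)$, $\varepsilon_i:=1-m_i$, $\alpha:=\sum_{i=1}^n\varepsilon_i$, and $\nu:=\sum_{i=1}^n\mathbb E U_i^2$. Then $0\le m_i\le1$ for all $i$ and $\alpha\le\nu\le2\alpha$.
   Context: A finitely supported positive measure $\eta$ on $\mathbb R$ is called admissible if $\int e^x\,\eta(dx)=\int e^{-x}\,\eta(dx)=1$. *)

theory Defs
  imports Complex_Main
begin

text \<open>A finitely supported positive measure on the reals is represented by its
  weight function w: the measure is the sum of w x times the Dirac mass at x, over
  the finite support {x. w x \<noteq> 0}; positivity means w x \<ge> 0.\<close>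

definition supp :: "(real \<Rightarrow> real) \<Rightarrow> real set" where
  "supp w = {x. w x \<noteq> 0}"

definition fin_pos_measure :: "(real \<Rightarrow> real) \<Rightarrow> bool" where
  "fin_pos_measure w \<longleftrightarrow> finite (supp w) \<and> (\<forall>x. 0 \<le> w x)"

definition integ :: "(real \<Rightarrow> real) \<Rightarrow> (real \<Rightarrow> real) \<Rightarrow> real" where
  "integ w f = (\<Sum>x\<in>supp w. w x * f x)"

definition admissible :: "(real \<Rightarrow> real) \<Rightarrow> bool" where
  "admissible w \<longleftrightarrow> fin_pos_measure w \<and> integ w exp = 1 \<and> integ w (\<lambda>x. exp (- x)) = 1"

definition mass :: "(real \<Rightarrow> real) \<Rightarrow> real" where
  "mass w = integ w (\<lambda>_. 1)"

definition law_X :: "(real \<Rightarrow> real) \<Rightarrow> (real \<Rightarrow> real)" where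
  "law_X w = (\<lambda>x. cosh x * w x)"

definition EU2 :: "(real \<Rightarrow> real) \<Rightarrow> real" where
  "EU2 w = integ (law_X w) (\<lambda>x. (tanh x)^2)"

end

theory Submission
  imports Defs
begin

lemma integ_cosh:
  assumes "admissible w"
  shows "(\<Sum>x\<in>supp w. w x * cosh x) = 1"
proof -
  have "(\<Sum>x\<in>supp w. w x * cosh x) = (\<Sum>x\<in>supp w. (w x * exp x + w x * exp (- x)) / 2)"
    by (rule sum.cong) (auto simp: cosh_def algebra_simps)
  also have "\<dots> = ((\<Sum>x\<in>supp w. w x * exp x) + (\<Sum>x\<in>supp w. w x * exp (- x))) / 2"
    by (simp only: sum_divide_distrib[symmetric] sum.distrib[symmetric])
  also have "\<dots> = 1" using assms by (simp add: admissible_def integ_def)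
  finally show ?thesis .
qed

lemma one_term:
  assumes "admissible w"
  shows "0 \<le> mass w \<and> mass w \<le> 1 \<and> 1 - mass w \<le> EU2 w \<and> EU2 w \<le> 2 * (1 - mass w)"
proof -
  have nn: "\<And>x. 0 \<le> w x" using assms by (simp add: admissible_def fin_pos_measure_def)
  have c1: "(\<Sum>x\<in>supp w. w x * cosh x) = 1" by (rule integ_cosh[OF assms])
  have m: "mass w = (\<Sum>x\<in>supp w. w x)" by (simp add: mass_def integ_def)
  have e: "EU2 w = (\<Sum>x\<in>supp w. w x * cosh x - w x / cosh x)"
    unfolding EU2_def integ_def law_X_def
  proof -
    have s: "supp (\<lambda>x. cosh x * w x) = supp w" by (simp add: supp_def)
    show "(\<Sum>x\<in>supp (\<lambda>x. cosh x * w x). cosh x * w x * (tanh x)\<^sup>2) = (\<Sum>x\<in>supp w. w x * cosh x - w x / cosh x)"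
      unfolding s
    proof (rule sum.cong)
      fix x :: real
      have cp: "cosh x > 0" by simp
      have "cosh x * w x * (tanh x)\<^sup>2 = w x * (sinh x)\<^sup>2 / cosh x"
        using cp by (simp add: tanh_def power2_eq_square field_simps)
      also have "\<dots> = w x * ((cosh x)\<^sup>2 - 1) / cosh x" by (simp add: cosh_square_eq)
      also have "\<dots> = w x * cosh x - w x / cosh x" using cp by (simp add: field_simps power2_eq_square)
      finally show "cosh x * w x * (tanh x)\<^sup>2 = w x * cosh x - w x / cosh x" .
    qed simp
  qed
  have p1: "\<And>x. w x \<le> w x * cosh x" using nn cosh_real_ge_1 by (simp add: mult_le_cancel_left1 not_less) (meson not_less)
  have p2: "\<And>x. w x / cosh x \<le> w x"
  proof -
    fix x :: real have "1 \<le> cosh x" by (rule cosh_real_ge_1)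
    thus "w x / cosh x \<le> w x" using nn[of x] by (simp add: divide_le_eq mult_le_cancel_left1)
  qed
  have p3: "\<And>x. 2 * w x - w x / cosh x \<le> w x * cosh x"
  proof -
    fix x :: real
    have cp: "cosh x > 0" by simp
    have "0 \<le> w x * (cosh x - 1)^2 / cosh x" using nn[of x] cp by simp
    moreover have "w x * (cosh x - 1)^2 / cosh x = w x * cosh x - (2 * w x - w x / cosh x)"
      using cp by (simp add: field_simps power2_eq_square)
    ultimately show "2 * w x - w x / cosh x \<le> w x * cosh x" by linarith
  qed
  have a: "0 \<le> mass w" unfolding m by (rule sum_nonneg) (use nn in auto)
  have b: "mass w \<le> 1" unfolding m c1[symmetric] by (rule sum_mono) (use p1 in auto)
  have c: "(\<Sum>x\<in>supp w. w x / cosh x) \<le> mass w" unfolding m by (rule sum_mono) (use p2 in auto)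
  have d: "(\<Sum>x\<in>supp w. 2 * w x - w x / cosh x) \<le> 1" unfolding c1[symmetric] by (rule sum_mono) (use p3 in auto)
  have e2: "EU2 w = 1 - (\<Sum>x\<in>supp w. w x / cosh x)" using e c1 by (simp add: sum_subtractf)
  have d2: "2 * mass w - (\<Sum>x\<in>supp w. w x / cosh x) \<le> 1" using d m by (simp add: sum_subtractf sum_distrib_left)
  show ?thesis
    apply (intro conjI)
    using a apply linarith
    using b apply linarith
    using c e2 apply linarith
    apply (subst e2) using d2 apply (simp add: algebra_simps)
    done
qed

theorem lemma2:
  fixes n :: nat and eta :: "nat \<Rightarrow> real \<Rightarrow> real"
  assumes "\<And>i. i < n \<Longrightarrow> admissible (eta i)"
  shows "(\<forall>i<n. 0 \<le> mass (eta i) \<and> mass (eta i) \<le> 1)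
       \<and> (\<Sum>i<n. 1 - mass (eta i)) \<le> (\<Sum>i<n. EU2 (eta i))
       \<and> (\<Sum>i<n. EU2 (eta i)) \<le> 2 * (\<Sum>i<n. 1 - mass (eta i))"
proof (intro conjI)
  show "\<forall>i<n. 0 \<le> mass (eta i) \<and> mass (eta i) \<le> 1" using one_term assms by blast
  show "(\<Sum>i<n. 1 - mass (eta i)) \<le> (\<Sum>i<n. EU2 (eta i))"
    by (rule sum_mono) (use one_term assms in auto)
  have "(\<Sum>i<n. EU2 (eta i)) \<le> (\<Sum>i<n. 2 * (1 - mass (eta i)))"
    by (rule sum_mono) (use one_term assms in auto)
  thus "(\<Sum>i<n. EU2 (eta i)) \<le> 2 * (\<Sum>i<n. 1 - mass (eta i))" by (simp add: sum_distrib_left)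
qed

end
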